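(* Every closed-disk drawable subset of $\mathbb{R}^2$ is Lebesgue measurable. Not every Lebesgue measurable subset of $\mathbb{R}^2$ is closed-disk drawable, but the collection $\mathcal{D}_{\le}$ of closed-disk drawable sets has the same cardinality as the collection of Lebesgue measurable subsets of $\mathbb{R}^2$. In particular, $|\mathcal{D}_{\le}|>|\mathcal{D}|$.
   Context: For $A\subseteq\mathbb{R}^2$ let $N(A)=\{x\in\mathbb{R}^2: |x-a|<1 \text{ for some } a\in A\}$ and $N_{\le}(A)=\{x\in\mathbb{R}^2: |x-a|\le 1 \text{ for some } a\in A\}$. Let $\mathcal{D}_1=\{N(A_1): A_1\subseteq\mathbb{R}^2\}$ and for $n\ge 2$ let $\mathcal{D}_n=\{D\cup N(A_n): D\in\mathcal{D}_{n-1}, A_n\subseteq\mathbb{R}^2\}$ if $n$ is odd and $\mathcal{D}_n=\{D\setminus N(A_n): D\in\mathcal{D}_{n-1}, A_n\subseteq\mathbb{R}^2\}$ if $n$ is even. The collection of drawable sets is $\mathcal{D}=\bigcup_{n\ge1}\mathcal{D}_n$. The collection $\mathcal{D}_{\le}$ of closed-disk drawable sets is defined in the same way with every $N(\cdot)$ replaced by $N_{\le}(\cdot)$. A Lebesgue set is a set differing from a Borel set by a subset of a Lebesgue-null set. *)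

theory Defs
  imports "HOL-Analysis.Analysis" "HOL-Library.Equipollence"
begin

type_synonym plane = "real ^ 2"

definition nbhd_open :: "plane set \<Rightarrow> plane set" where
  "nbhd_open A = {x. \<exists>a\<in>A. dist x a < 1}"

definition nbhd_closed :: "plane set \<Rightarrow> plane set" where
  "nbhd_closed A = {x. \<exists>a\<in>A. dist x a \<le> 1}"

fun drawable_stage :: "(plane set \<Rightarrow> plane set) \<Rightarrow> nat \<Rightarrow> plane set set" where
  "drawable_stage Nb 0 = {}"
| "drawable_stage Nb (Suc 0) = {Nb A | A. True}"
| "drawable_stage Nb (Suc (Suc n)) =
     (if odd (Suc (Suc n))
      then {D \<union> Nb A | D A. D \<in> drawable_stage Nb (Suc n)}
      else {D - Nb A | D A. D \<in> drawable_stage Nb (Suc n)})"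

definition drawable_sets :: "(plane set \<Rightarrow> plane set) \<Rightarrow> plane set set" where
  "drawable_sets Nb = (\<Union>n\<in>{1..}. drawable_stage Nb n)"

abbreviation drawable :: "plane set set" where
  "drawable \<equiv> drawable_sets nbhd_open"

abbreviation closed_drawable :: "plane set set" where
  "closed_drawable \<equiv> drawable_sets nbhd_closed"

end

theory Submission
  imports Defs
begin


lemma nbhd_closed_lmeas: "nbhd_closed A \<in> sets (lebesgue :: plane measure)"
proof -
  define U where "U = nbhd_closed A"
  define K where "K = {i::plane\<times>real. 0 < snd i \<and> cball (fst i) (snd i) \<subseteq> U}"
  have cov: "\<exists>i. i \<in> K \<and> x \<in> cball (fst i) (snd i) \<and> snd i < d" if xU: "x \<in> U" and dpos: "0 < d" for x d
  proof -
    obtain a where a: "a \<in> A" "dist x a \<le> 1" using xU by (auto simp: U_def nbhd_closed_def)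
    define \<rho> where "\<rho> = min (d/2) 1"
    have rp: "0 < \<rho>" "\<rho> \<le> 1" "\<rho> < d" using dpos by (auto simp: \<rho>_def)
    define c where "c = (1-\<rho>) *\<^sub>R x + \<rho> *\<^sub>R a"
    have "dist x c = \<rho> * dist x a"
    proof -
      have "x - c = \<rho> *\<^sub>R (x - a)" by (simp add: c_def algebra_simps)
      then show ?thesis using rp by (simp add: dist_norm)
    qed
    then have xc: "dist x c \<le> \<rho>" using a rp by (simp add: mult_left_le)
    have "dist a c = (1-\<rho>) * dist x a"
    proof -
      have "a - c = (1-\<rho>) *\<^sub>R (a - x)" by (simp add: c_def algebra_simps)
      then show ?thesis using rp by (simp add: dist_norm norm_minus_commute)
    qed
    then have ac: "dist a c \<le> 1 - \<rho>" using a rp by (simp add: mult_left_le)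
    have "cball c \<rho> \<subseteq> U"
    proof
      fix y assume "y \<in> cball c \<rho>"
      then have "dist c y \<le> \<rho>" by simp
      then have "dist y a \<le> 1" using ac dist_triangle[of y a c] by (simp add: dist_commute)
      then show "y \<in> U" using a unfolding U_def nbhd_closed_def by auto
    qed
    then show ?thesis using rp xc
      by (intro exI[of _ "(c,\<rho>)"]) (auto simp: K_def dist_commute)
  qed
  obtain C where C: "countable C" "C \<subseteq> K"
     "negligible(U - (\<Union>i \<in> C. cball (fst i) (snd i)))"
  proof -
    have r0: "\<And>i. i \<in> K \<Longrightarrow> 0 < snd i" by (simp add: K_def)
    show ?thesis
      by (rule Vitali_covering_theorem_cballs[of K snd U fst, OF r0 cov]) (use that in auto)
  qed
  have sub: "(\<Union>i \<in> C. cball (fst i) (snd i)) \<subseteq> U" using C(2) K_def by auto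
  have m1: "(\<Union>i \<in> C. cball (fst i) (snd i)) \<in> sets lebesgue"
  proof (rule sets.countable_UN''[OF C(1)])
    fix i show "cball (fst i) (snd i) \<in> sets lebesgue"
      by (metis borel_closed closed_cball sets_completionI_sets sets_lborel)
  qed
  have "U = (\<Union>i \<in> C. cball (fst i) (snd i)) \<union> (U - (\<Union>i \<in> C. cball (fst i) (snd i)))"
    using sub by auto
  also have "\<dots> \<in> sets lebesgue" using m1 negligible_imp_sets[OF C(3)] by (rule sets.Un)
  finally show ?thesis unfolding U_def .
qed

lemma stage_prop:
  assumes b: "\<And>A. P (Nb A)" and u: "\<And>X Y. P X \<Longrightarrow> P Y \<Longrightarrow> P (X \<union> Y)"
    and d: "\<And>X Y. P X \<Longrightarrow> P Y \<Longrightarrow> P (X - Y)"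
  shows "\<forall>D \<in> drawable_stage Nb (Suc n). P D"
proof (induction n)
  case 0
  then show ?case using b by auto
next
  case (Suc n)
  show ?case
  proof
    fix D assume D: "D \<in> drawable_stage Nb (Suc (Suc n))"
    show "P D"
    proof (cases "odd (Suc (Suc n))")
      case True
      then obtain D' A where "D = D' \<union> Nb A" "D' \<in> drawable_stage Nb (Suc n)" using D by auto
      then show ?thesis using Suc b[of A] u[of D' "Nb A"] by auto
    next
      case False
      then obtain D' A where "D = D' - Nb A" "D' \<in> drawable_stage Nb (Suc n)" using D by auto
      then show ?thesis using Suc b[of A] d[of D' "Nb A"] by auto
    qed
  qed
qed

lemma drawable_prop:
  assumes b: "\<And>A. P (Nb A)" and u: "\<And>X Y. P X \<Longrightarrow> P Y \<Longrightarrow> P (X \<union> Y)"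
    and d: "\<And>X Y. P X \<Longrightarrow> P Y \<Longrightarrow> P (X - Y)"
    and D: "D \<in> drawable_sets Nb"
  shows "P D"
proof -
  obtain n where n: "n \<ge> 1" "D \<in> drawable_stage Nb n" using D by (auto simp: drawable_sets_def)
  then obtain m where "n = Suc m" by (cases n) auto
  then show ?thesis using stage_prop[of P Nb m, OF b u d] n by auto
qed

lemma closed_drawable_meas: "closed_drawable \<subseteq> sets (lebesgue :: plane measure)"
proof
  fix D assume D: "D \<in> closed_drawable"
  show "D \<in> sets (lebesgue :: plane measure)"
    by (rule drawable_prop[where P="\<lambda>X. X \<in> sets lebesgue", OF _ _ _ D])
       (simp_all add: nbhd_closed_lmeas sets.Un sets.Diff)
qed

definition good :: "plane set \<Rightarrow> bool" where
  "good T \<longleftrightarrow> (\<exists>G F. open G \<and> closed F \<and> interior F = {} \<and> (T - G) \<union> (G - T) \<subseteq> F)"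

lemma interior_Un_empty:
  assumes "closed S" "interior S = {}" "interior T = {}" shows "interior (S \<union> T) = {}"
  using interior_closed_Un_empty_interior[OF assms(1,3)] assms(2) by simp

lemma interior_frontier_open: assumes "open G" shows "interior (frontier G) = {}"
proof -
  define I where "I = interior (frontier G)"
  have fr: "frontier G = closure G - G" using assms by (simp add: frontier_def interior_open)
  have oI: "open I" unfolding I_def by simp
  have sI: "I \<subseteq> closure G - G" unfolding I_def using interior_subset[of "frontier G"] fr by blast
  then have "I \<inter> G = {}" by blast
  then have "I \<inter> closure G = {}" using open_Int_closure_eq_empty[OF oI, of G] by simp
  then show ?thesis using sI unfolding I_def by blast
qed

lemma good_Un: assumes "good X" "good Y" shows "good (X \<union> Y)"
proof -
  obtain G1 F1 where 1: "open G1" "closed F1" "interior F1 = {}" "(X - G1) \<union> (G1 - X) \<subseteq> F1"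
    using assms(1) unfolding good_def by blast
  obtain G2 F2 where 2: "open G2" "closed F2" "interior F2 = {}" "(Y - G2) \<union> (G2 - Y) \<subseteq> F2"
    using assms(2) unfolding good_def by blast
  have a: "open (G1 \<union> G2)" using 1(1) 2(1) by (rule open_Un)
  have b: "closed (F1 \<union> F2)" using 1(2) 2(2) by (rule closed_Un)
  have c: "interior (F1 \<union> F2) = {}" using interior_Un_empty[OF 1(2) 1(3) 2(3)] .
  have d: "((X \<union> Y) - (G1 \<union> G2)) \<union> ((G1 \<union> G2) - (X \<union> Y)) \<subseteq> F1 \<union> F2"
    using 1(4) 2(4) by blast
  show ?thesis unfolding good_def using a b c d by blast
qed

lemma good_Compl: assumes "good X" shows "good (- X)"
proof -
  obtain G F where 1: "open G" "closed F" "interior F = {}" "(X - G) \<union> (G - X) \<subseteq> F"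
    using assms unfolding good_def by blast
  have fr: "frontier G = closure G - G" using 1(1) by (simp add: frontier_def interior_open)
  have a: "open (- closure G)" by (simp add: open_Compl)
  have b: "closed (F \<union> frontier G)" using 1(2) by (simp add: closed_Un)
  have c: "interior (F \<union> frontier G) = {}"
    using interior_Un_empty[OF 1(2) 1(3) interior_frontier_open[OF 1(1)]] .
  have d: "(- X - (- closure G)) \<union> ((- closure G) - (- X)) \<subseteq> F \<union> frontier G"
    using 1(4) fr closure_subset[of G] by blast
  show ?thesis unfolding good_def using a b c d by blast
qed

lemma good_Diff: assumes "good X" "good Y" shows "good (X - Y)"
proof -
  have "X - Y = - (- X \<union> Y)" by auto
  then show ?thesis using assms good_Un good_Compl by metis
qed

lemma open_nbhd_open: "open (nbhd_open A)"
proof -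
  have "nbhd_open A = (\<Union>a\<in>A. ball a 1)" by (auto simp: nbhd_open_def dist_commute)
  then show ?thesis by auto
qed

lemma good_nbhd_closed: "good (nbhd_closed A)"
proof -
  let ?G = "nbhd_open A"
  have sub1: "?G \<subseteq> nbhd_closed A" by (auto simp: nbhd_open_def nbhd_closed_def intro: less_imp_le)
  have sub2: "nbhd_closed A \<subseteq> closure ?G"
  proof
    fix x assume "x \<in> nbhd_closed A"
    then obtain a where a: "a \<in> A" "dist x a \<le> 1" by (auto simp: nbhd_closed_def)
    then have "x \<in> closure (ball a 1)" by (simp add: dist_commute)
    moreover have "ball a 1 \<subseteq> ?G" using a by (auto simp: nbhd_open_def dist_commute)
    ultimately show "x \<in> closure ?G" using closure_mono by blast
  qed
  have o: "open ?G" by (rule open_nbhd_open)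
  have fr: "frontier ?G = closure ?G - ?G" using o by (simp add: frontier_def interior_open)
  have b: "closed (frontier ?G)" by simp
  have c: "interior (frontier ?G) = {}" using interior_frontier_open[OF o] .
  have d: "(nbhd_closed A - ?G) \<union> (?G - nbhd_closed A) \<subseteq> frontier ?G"
    using sub1 sub2 fr by blast
  show ?thesis unfolding good_def using o b c d by blast
qed

lemma closed_drawable_good: assumes D: "D \<in> closed_drawable" shows "good D"
  by (rule drawable_prop[where P=good, OF _ _ _ D]) (simp_all add: good_nbhd_closed good_Un good_Diff)

definition e1 :: plane where "e1 = axis 1 1"

definition Sq :: "plane set" where "Sq = {x. e1 \<bullet> x \<in> \<rat>}"

lemma e1_props: "norm e1 = 1" "e1 \<bullet> e1 = 1" "e1 \<noteq> 0"
  by (auto simp: e1_def)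

lemma Sq_meas: "Sq \<in> sets (lebesgue :: plane measure)"
proof -
  have "Sq = \<Union>((\<lambda>q. {x. e1 \<bullet> x = q}) ` \<rat>)" by (auto simp: Sq_def)
  moreover have "negligible (\<Union>((\<lambda>q. {x. e1 \<bullet> x = q}) ` \<rat>))"
    by (rule negligible_countable_Union) (auto simp: countable_rat negligible_hyperplane e1_props)
  ultimately show ?thesis using negligible_imp_sets by simp
qed

lemma near_point:
  assumes "0 < \<delta>" "e1 \<bullet> y < w" "w < e1 \<bullet> y + \<delta>"
  shows "\<exists>z. dist y z < \<delta> \<and> e1 \<bullet> z = w"
proof -
  define z where "z = y + (w - e1 \<bullet> y) *\<^sub>R e1"
  have "e1 \<bullet> z = w" by (simp add: z_def inner_add_right e1_props)
  moreover have "dist y z = \<bar>w - e1 \<bullet> y\<bar>" by (simp add: z_def dist_norm e1_props)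
  ultimately show ?thesis using assms by (intro exI[of _ z]) auto
qed

lemma dense_Sq:
  assumes "0 < \<delta>"
  shows "\<exists>z. dist y z < \<delta> \<and> z \<in> Sq" "\<exists>z. dist y z < \<delta> \<and> z \<notin> Sq"
proof -
  obtain q where q: "q \<in> \<rat>" "e1 \<bullet> y < q" "q < e1 \<bullet> y + \<delta>"
    using Rats_dense_in_real[of "e1 \<bullet> y" "e1 \<bullet> y + \<delta>"] assms by auto
  then show "\<exists>z. dist y z < \<delta> \<and> z \<in> Sq" using near_point[OF assms q(2,3)]
    by (auto simp: Sq_def)
  have "uncountable {e1 \<bullet> y<..<e1 \<bullet> y + \<delta>}" using assms uncountable_open_interval by simp
  then have "\<not> {e1 \<bullet> y<..<e1 \<bullet> y + \<delta>} \<subseteq> \<rat>" using countable_rat countable_subset by blast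
  then obtain w where w: "w \<notin> \<rat>" "e1 \<bullet> y < w" "w < e1 \<bullet> y + \<delta>"
    by (auto simp: subset_iff)
  then show "\<exists>z. dist y z < \<delta> \<and> z \<notin> Sq" using near_point[OF assms w(2,3)]
    by (auto simp: Sq_def)
qed

lemma Sq_not_good: "\<not> good Sq"
proof
  assume "good Sq"
  then obtain G F where 1: "open G" "closed F" "interior F = {}" "(Sq - G) \<union> (G - Sq) \<subseteq> F"
    unfolding good_def by blast
  show False
  proof (cases "G = {}")
    case True
    then have SF: "Sq \<subseteq> F" using 1(4) by blast
    have "F \<noteq> UNIV" using 1(3) by auto
    then obtain y where y: "y \<in> - F" by blast
    have "open (- F)" using 1(2) by (simp add: open_Compl)
    then obtain \<delta> where d: "0 < \<delta>" "ball y \<delta> \<subseteq> - F" using y open_contains_ball by blast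
    obtain z where "dist y z < \<delta>" "z \<in> Sq" using dense_Sq(1)[OF d(1)] by blast
    then show False using d SF by auto
  next
    case False
    have "\<not> G \<subseteq> F"
    proof
      assume "G \<subseteq> F"
      then have "G \<subseteq> interior F" using interior_maximal 1(1) by blast
      then show False using False 1(3) by blast
    qed
    then obtain y where y: "y \<in> G - F" by blast
    have "open (G - F)" using 1(1,2) by (rule open_Diff)
    then obtain \<delta> where d: "0 < \<delta>" "ball y \<delta> \<subseteq> G - F" using y open_contains_ball by blast
    obtain z where "dist y z < \<delta>" "z \<notin> Sq" using dense_Sq(2)[OF d(1)] by blast
    then show False using d 1(4) by auto
  qed
qed

lemma not_leb_sub: "\<not> sets (lebesgue :: plane measure) \<subseteq> closed_drawable"
  using Sq_meas Sq_not_good closed_drawable_good by blast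



lemma Pow_lepoll_mono: assumes "A \<lesssim> B" shows "Pow A \<lesssim> Pow B"
proof -
  obtain f where f: "inj_on f A" "f ` A \<subseteq> B" using assms unfolding lepoll_def by blast
  have "inj_on (image f) (Pow A)" using inj_on_image_Pow[OF f(1)] .
  moreover have "image f ` Pow A \<subseteq> Pow B" using f(2) by auto
  ultimately show ?thesis unfolding lepoll_def by blast
qed

lemma real_times_real: "(UNIV :: (real \<times> real) set) \<approx> (UNIV :: real set)"
proof -
  have "infinite (UNIV :: real set)" by (simp add: infinite_UNIV_char_0)
  then have "ordIso2 (card_of ((UNIV :: real set) \<times> (UNIV :: real set))) (card_of (UNIV :: real set))"
    by (rule card_of_Times_same_infinite)
  then show ?thesis by (simp add: eqpoll_iff_card_of_ordIso)
qed

lemma plane_lepoll_real: "(UNIV :: plane set) \<lesssim> (UNIV :: real set)"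
proof -
  have "(UNIV :: plane set) \<lesssim> (UNIV :: (real \<times> real) set)"
    unfolding lepoll_def
  proof (intro exI conjI)
    show "inj_on (\<lambda>p::plane. (p$1, p$2)) UNIV"
      by (auto simp: inj_on_def vec_eq_iff forall_2)
  qed auto
  also have "\<dots> \<approx> (UNIV :: real set)" by (rule real_times_real)
  finally show ?thesis .
qed

definition hh :: "real \<Rightarrow> plane" where
  "hh t = vector [2 / sqrt (1 + t^2), 2 * t / sqrt (1 + t^2)]"

lemma hh_sphere: "hh t \<in> sphere 0 2"
proof -
  define s where "s = sqrt (1 + t^2)"
  have s: "s > 0" "s^2 = 1 + t^2" by (auto simp: s_def add_pos_nonneg)
  have "hh t \<bullet> hh t = (2/s)^2 + (2*t/s)^2"
    by (simp add: hh_def inner_vec_def sum_2 s_def power2_eq_square)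
  also have "\<dots> = (4 + 4 * t^2) / s^2" by (simp add: power_divide power_mult_distrib add_divide_distrib)
  also have "\<dots> = 4"
  proof -
    have "4 + 4 * t^2 = 4 * s^2" using s(2) by simp
    then show ?thesis using s(1) by simp
  qed
  finally have "hh t \<bullet> hh t = 4" .
  then have "norm (hh t) = 2" by (simp add: norm_eq_sqrt_inner real_sqrt_eq_iff)
  then show ?thesis by simp
qed

lemma hh_inj: "inj hh"
proof (rule injI)
  fix t u assume "hh t = hh u"
  then have 1: "2 / sqrt (1 + t^2) = 2 / sqrt (1 + u^2)" and 2: "2 * t / sqrt (1 + t^2) = 2 * u / sqrt (1 + u^2)"
    by (metis hh_def vector_2)+
  have pt: "sqrt (1 + t^2) > 0" "sqrt (1 + u^2) > 0" by (auto simp: add_pos_nonneg)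
  from 1 pt have "sqrt (1 + t^2) = sqrt (1 + u^2)" by (simp add: field_simps)
  with 2 pt show "t = u" by (simp add: field_simps)
qed

lemma real_lepoll_sphere: "(UNIV :: real set) \<lesssim> sphere (0::plane) 2"
  unfolding lepoll_def using hh_inj hh_sphere by blast

lemma half_point:
  fixes a :: plane
  assumes a: "a \<in> sphere 0 2" and A: "A \<subseteq> sphere 0 2"
  shows "(1/2) *\<^sub>R a \<in> nbhd_closed A \<longleftrightarrow> a \<in> A"
proof
  assume "a \<in> A"
  moreover have "dist ((1/2) *\<^sub>R a) a = 1"
  proof -
    have e: "(1/2) *\<^sub>R a - a = (-1/2) *\<^sub>R a" by (simp add: scaleR_diff_left[symmetric])
    have "dist ((1/2) *\<^sub>R a) a = norm ((-1/2) *\<^sub>R a)" unfolding dist_norm e ..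
    then show ?thesis using a by simp
  qed
  ultimately show "(1/2) *\<^sub>R a \<in> nbhd_closed A" by (force simp: nbhd_closed_def)
next
  assume "(1/2) *\<^sub>R a \<in> nbhd_closed A"
  then obtain b where b: "b \<in> A" "dist ((1/2) *\<^sub>R a) b \<le> 1" by (auto simp: nbhd_closed_def)
  have aa: "a \<bullet> a = 4" using a by (simp add: dot_square_norm)
  have bb: "b \<bullet> b = 4" using b(1) A by (auto simp: dot_square_norm)
  have "(dist ((1/2) *\<^sub>R a) b)^2 = ((1/2) *\<^sub>R a - b) \<bullet> ((1/2) *\<^sub>R a - b)"
    by (simp add: dist_norm dot_square_norm)
  also have "\<dots> = (1/4) * (a \<bullet> a) - a \<bullet> b + b \<bullet> b"
    by (simp add: inner_diff_left inner_diff_right inner_commute algebra_simps)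
  finally have d2: "(dist ((1/2) *\<^sub>R a) b)^2 = 5 - a \<bullet> b" using aa bb by simp
  have "(dist ((1/2) *\<^sub>R a) b)^2 \<le> 1" using b(2) by (simp add: abs_le_square_iff power_le_one)
  then have ab: "a \<bullet> b \<ge> 4" using d2 by simp
  have "(a - b) \<bullet> (a - b) = a \<bullet> a - 2 * (a \<bullet> b) + b \<bullet> b"
    by (simp add: inner_diff_left inner_diff_right inner_commute)
  then have "(a - b) \<bullet> (a - b) \<le> 0" using aa bb ab by simp
  then have "(a - b) \<bullet> (a - b) = 0" using inner_ge_zero[of "a - b"] by linarith
  then have "a - b = 0" by simp
  then show "a \<in> A" using b(1) by simp
qed

lemma nbhd_closed_drawable: "nbhd_closed A \<in> closed_drawable"
  unfolding drawable_sets_def by (rule UN_I[of "Suc 0"]) auto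

lemma sphere_Pow_lepoll: "Pow (sphere (0::plane) 2) \<lesssim> closed_drawable"
  unfolding lepoll_def
proof (intro exI conjI)
  show "inj_on nbhd_closed (Pow (sphere 0 2))"
  proof (rule inj_onI)
    fix A B assume AB: "A \<in> Pow (sphere (0::plane) 2)" "B \<in> Pow (sphere 0 2)" "nbhd_closed A = nbhd_closed B"
    show "A = B"
    proof (rule set_eqI)
      fix a
      show "a \<in> A \<longleftrightarrow> a \<in> B"
      proof (cases "a \<in> sphere 0 2")
        case True
        then show ?thesis using half_point[OF True, of A] half_point[OF True, of B] AB by auto
      next
        case False
        then show ?thesis using AB by auto
      qed
    qed
  qed
  show "nbhd_closed ` Pow (sphere 0 2) \<subseteq> closed_drawable" using nbhd_closed_drawable by auto
qed



fun comb :: "nat \<Rightarrow> (nat \<Rightarrow> plane set) \<Rightarrow> plane set" where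
  "comb 0 f = {}"
| "comb (Suc 0) f = f 0"
| "comb (Suc (Suc n)) f = (if odd (Suc (Suc n)) then comb (Suc n) f \<union> f (Suc n) else comb (Suc n) f - f (Suc n))"

lemma comb_cong: "(\<forall>i<m. f i = g i) \<Longrightarrow> comb m f = comb m g"
  by (induction m f rule: comb.induct) auto

lemma stage_open: "\<forall>D \<in> drawable_stage nbhd_open (Suc n). \<exists>f. (\<forall>i. open (f i)) \<and> D = comb (Suc n) f"
proof (induction n)
  case 0
  show ?case
  proof
    fix D assume "D \<in> drawable_stage nbhd_open (Suc 0)"
    then obtain A where "D = nbhd_open A" by auto
    then show "\<exists>f. (\<forall>i. open (f i)) \<and> D = comb (Suc 0) f"
      using open_nbhd_open by (intro exI[of _ "\<lambda>_. nbhd_open A"]) auto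
  qed
next
  case (Suc n)
  show ?case
  proof
    fix D assume D: "D \<in> drawable_stage nbhd_open (Suc (Suc n))"
    obtain D' A where DA: "D' \<in> drawable_stage nbhd_open (Suc n)"
      "D = (if odd (Suc (Suc n)) then D' \<union> nbhd_open A else D' - nbhd_open A)"
      using D by (auto split: if_splits)
    obtain f where f: "\<forall>i. open (f i)" "D' = comb (Suc n) f" using Suc DA(1) by blast
    define f' where "f' = f(Suc n := nbhd_open A)"
    have "comb (Suc n) f' = comb (Suc n) f" by (rule comb_cong) (auto simp: f'_def)
    then have "D = comb (Suc (Suc n)) f'" using DA(2) f(2) by (simp add: f'_def)
    moreover have "\<forall>i. open (f' i)" using f(1) open_nbhd_open by (simp add: f'_def)
    ultimately show "\<exists>f. (\<forall>i. open (f i)) \<and> D = comb (Suc (Suc n)) f" by blast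
  qed
qed

lemma drawable_lepoll: "drawable \<lesssim> (UNIV :: (nat \<times> nat set) set)"
proof -
  obtain B :: "plane set set" where B: "countable B" "topological_basis B"
    using ex_countable_basis by blast
  have Bne: "B \<noteq> {}"
  proof -
    obtain B' where "B' \<subseteq> B" "\<Union>B' = (UNIV :: plane set)"
      using B(2) unfolding topological_basis_def by blast
    then show ?thesis by auto
  qed
  have rB: "range (from_nat_into B) = B" using Bne B(1) by simp
  have rep: "\<exists>T. U = \<Union>{from_nat_into B k | k. k \<in> T}" if "open U" for U
  proof -
    obtain B' where B': "B' \<subseteq> B" "\<Union>B' = U"
      using B(2) \<open>open U\<close> unfolding topological_basis_def by blast
    have "\<Union>{from_nat_into B k | k. k \<in> {k. from_nat_into B k \<in> B'}} = \<Union>B'"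
    proof -
      have ex: "\<And>X. X \<in> B' \<Longrightarrow> \<exists>k. X = from_nat_into B k" using B'(1) rB by (metis rangeE subsetD)
      show ?thesis
      proof
        show "\<Union>{from_nat_into B k | k. k \<in> {k. from_nat_into B k \<in> B'}} \<subseteq> \<Union>B'" by auto
        show "\<Union>B' \<subseteq> \<Union>{from_nat_into B k | k. k \<in> {k. from_nat_into B k \<in> B'}}"
        proof
          fix x assume "x \<in> \<Union>B'"
          then obtain X where X: "X \<in> B'" "x \<in> X" by blast
          then obtain k where "X = from_nat_into B k" using ex by blast
          then show "x \<in> \<Union>{from_nat_into B k | k. k \<in> {k. from_nat_into B k \<in> B'}}" using X by auto
        qed
      qed
    qed
    then show ?thesis using B'(2) by (intro exI[of _ "{k. from_nat_into B k \<in> B'}"]) simp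
  qed
  define dec where "dec T i = \<Union>{from_nat_into B k | k. prod_encode (i,k) \<in> T}" for T i
  define g where "g p = comb (fst p) (dec (snd p))" for p
  have "drawable \<subseteq> g ` UNIV"
  proof
    fix D assume "D \<in> drawable"
    then obtain n where n: "n \<ge> 1" "D \<in> drawable_stage nbhd_open n" by (auto simp: drawable_sets_def)
    then obtain m where m: "n = Suc m" by (cases n) auto
    obtain f where f: "\<forall>i. open (f i)" "D = comb (Suc m) f" using stage_open[of m] n m by blast
    have "\<forall>i. \<exists>T. f i = \<Union>{from_nat_into B k | k. k \<in> T}" using f(1) rep by blast
    from choice[OF this] obtain Tf where Tf0: "\<forall>i. f i = \<Union>{from_nat_into B k | k. k \<in> Tf i}" by blast
    have Tf: "f i = \<Union>{from_nat_into B k | k. k \<in> Tf i}" for i using Tf0 by blast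
    define T where "T = {prod_encode (i,k) | i k. k \<in> Tf i}"
    have "prod_encode (i,k) \<in> T \<longleftrightarrow> k \<in> Tf i" for i k
      by (auto simp: T_def prod_encode_eq)
    then have "dec T i = f i" for i by (simp add: dec_def Tf)
    then have "dec T = f" by auto
    then have "D = g (Suc m, T)" by (simp add: g_def f(2))
    then show "D \<in> g ` UNIV" by blast
  qed
  then show ?thesis by (rule subset_image_lepoll)
qed

lemma natpair_lepoll_real: "(UNIV :: (nat \<times> nat set) set) \<lesssim> (UNIV :: real set)"
proof -
  have 1: "(UNIV :: nat set) \<lesssim> (UNIV :: real set)"
    unfolding lepoll_def by (intro exI[of _ real]) (auto simp: inj_on_def)
  have 2: "(UNIV :: nat set set) \<lesssim> (UNIV :: real set)"
    using nat_sets_eqpoll_reals by (rule eqpoll_imp_lepoll)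
  have "(UNIV :: (nat \<times> nat set) set) = (UNIV :: nat set) \<times> (UNIV :: nat set set)" by simp
  also have "\<dots> \<lesssim> (UNIV :: real set) \<times> (UNIV :: real set)" using 1 2 by (rule times_lepoll_mono)
  also have "\<dots> \<approx> (UNIV :: real set)" using real_times_real by simp
  finally show ?thesis .
qed

theorem theorem1p3:
  shows "closed_drawable \<subseteq> sets (lebesgue :: plane measure)
       \<and> \<not> sets (lebesgue :: plane measure) \<subseteq> closed_drawable
       \<and> closed_drawable \<approx> sets (lebesgue :: plane measure)
       \<and> drawable \<prec> closed_drawable"
proof (intro conjI)
  show 1: "closed_drawable \<subseteq> sets (lebesgue :: plane measure)" by (rule closed_drawable_meas)
  show "\<not> sets (lebesgue :: plane measure) \<subseteq> closed_drawable" by (rule not_leb_sub)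
  have PR: "Pow (UNIV :: real set) \<lesssim> closed_drawable"
    using Pow_lepoll_mono[OF real_lepoll_sphere] sphere_Pow_lepoll by (rule lepoll_trans)
  have "sets (lebesgue :: plane measure) \<lesssim> Pow (UNIV :: plane set)" by (rule subset_imp_lepoll) auto
  also have "\<dots> \<lesssim> Pow (UNIV :: real set)" by (rule Pow_lepoll_mono[OF plane_lepoll_real])
  also have "\<dots> \<lesssim> closed_drawable" by (rule PR)
  finally have L: "sets (lebesgue :: plane measure) \<lesssim> closed_drawable" .
  show "closed_drawable \<approx> sets (lebesgue :: plane measure)"
    by (rule lepoll_antisym[OF subset_imp_lepoll[OF 1] L])
  have "drawable \<lesssim> (UNIV :: real set)"
    using drawable_lepoll natpair_lepoll_real by (rule lepoll_trans)
  also have "(UNIV :: real set) \<prec> Pow (UNIV :: real set)" by (rule lesspoll_Pow_self)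
  finally have "drawable \<prec> Pow (UNIV :: real set)" .
  also have "Pow (UNIV :: real set) \<lesssim> closed_drawable" by (rule PR)
  finally show "drawable \<prec> closed_drawable" .
qed

end
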